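(* Let $A\in\mathbb{R}^{n\times n}$, $B\in\mathbb{R}^{n\times m}$, $C\in\mathbb{R}^{p\times n}$, $D\in\mathbb{R}^{p\times p}$ with $(A,B)$ reachable, $(C,A)$ observable, $BB^T\succ0$, $DD^T\succ0$. Fix $c>0$, and let $r^R_c$, $r$ and the sequence $(\overline{P}_t)_{t\ge0}$ be as in the context. Let $\tilde P_0\in\mathcal{P}$ with $\tilde P_0\succeq BB^T$ and define $\tilde P_{t+1}=r^R_c(\tilde P_t)$ for $t\ge0$. Then for every integer $q\ge 0$, $$\tilde P_t\succeq \overline{P}_q\qquad\text{for all } t\ge q.$$
   Context: $\mathcal{P}$ denotes the cone of $n\times n$ real symmetric positive definite matrices; $\succeq$ is the Loewner order; $\lambda_1(P)$ is the largest eigenvalue of $P$. For $P\in\mathcal{P}$ and $\theta$ with $I-\theta P\succ0$, let $\gamma(\theta,P)=\tfrac12\big[\log\det(I-\theta P)+\mathrm{tr}((I-\theta P)^{-1})-n\big]$. For $c>0$ and $P\in\mathcal{P}$, $\theta_c(P)$ denotes the unique $\theta\in(0,\lambda_1(P)^{-1})$ with $\gamma(\theta,P)=c$ (its existence and uniqueness are taken as given). Define $r^R_c(P)=A[P^{-1}+C^T(DD^T)^{-1}C-\theta_c(P)I_n]^{-1}A^T+BB^T$ and the Riccati map $r(P)=A[P^{-1}+C^T(DD^T)^{-1}C]^{-1}A^T+BB^T$. Let $\overline{P}_0=BB^T$ and $\overline{P}_{t+1}=r(\overline{P}_t)$ for $t\ge0$. *)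

theory Defs
  imports "HOL-Analysis.Analysis"
begin

text \<open>Matrices are Cartesian-type matrices: an r x s real matrix is real^'s^'r.\<close>

definition mpow :: "real^'n^'n \<Rightarrow> nat \<Rightarrow> real^'n^'n" where
  "mpow A k = ((\<lambda>M. A ** M) ^^ k) (mat 1)"

definition sym_mat :: "real^'n^'n \<Rightarrow> bool" where
  "sym_mat P \<longleftrightarrow> transpose P = P"

definition pos_def :: "real^'n^'n \<Rightarrow> bool" where
  "pos_def P \<longleftrightarrow> sym_mat P \<and> (\<forall>x. x \<noteq> 0 \<longrightarrow> x \<bullet> (P *v x) > 0)"

definition pos_semidef :: "real^'n^'n \<Rightarrow> bool" where
  "pos_semidef P \<longleftrightarrow> sym_mat P \<and> (\<forall>x. x \<bullet> (P *v x) \<ge> 0)"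

definition loewner_ge :: "real^'n^'n \<Rightarrow> real^'n^'n \<Rightarrow> bool" where
  "loewner_ge P Q \<longleftrightarrow> pos_semidef (P - Q)"

definition lambda_max :: "real^'n^'n \<Rightarrow> real" where
  "lambda_max P = Max {l. \<exists>v. v \<noteq> 0 \<and> P *v v = l *\<^sub>R v}"

definition gamma :: "real \<Rightarrow> real^'n^'n \<Rightarrow> real" where
  "gamma \<theta> P = (1/2) * (ln (det (mat 1 - \<theta> *\<^sub>R P))
      + trace (matrix_inv (mat 1 - \<theta> *\<^sub>R P)) - real CARD('n))"

definition theta_c :: "real \<Rightarrow> real^'n^'n \<Rightarrow> real" where
  "theta_c c P = (THE \<theta>. 0 < \<theta> \<and> \<theta> < inverse (lambda_max P) \<and> gamma \<theta> P = c)"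

definition riccati ::
  "real^'n^'n \<Rightarrow> real^'m^'n \<Rightarrow> real^'n^'p \<Rightarrow> real^'p^'p \<Rightarrow> real^'n^'n \<Rightarrow> real^'n^'n" where
  "riccati A B C D P = A ** matrix_inv (matrix_inv P
      + transpose C ** matrix_inv (D ** transpose D) ** C) ** transpose A + B ** transpose B"

definition riccati_R ::
  "real \<Rightarrow> real^'n^'n \<Rightarrow> real^'m^'n \<Rightarrow> real^'n^'p \<Rightarrow> real^'p^'p \<Rightarrow> real^'n^'n \<Rightarrow> real^'n^'n" where
  "riccati_R c A B C D P = A ** matrix_inv (matrix_inv P
      + transpose C ** matrix_inv (D ** transpose D) ** C - theta_c c P *\<^sub>R mat 1) ** transpose A
      + B ** transpose B"

text \<open>(A,B) reachable: the reachability matrix [B, AB, ..., A^(n-1) B] has rank n,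
  i.e. its columns span R^n.\<close>
definition reachable :: "real^'n^'n \<Rightarrow> real^'m^'n \<Rightarrow> bool" where
  "reachable A B \<longleftrightarrow>
     span (\<Union>k<CARD('n). columns (mpow A k ** B)) = (UNIV :: (real^'n) set)"

text \<open>(C,A) observable: the observability matrix [C; CA; ...; C A^(n-1)] has rank n,
  i.e. its rows span R^n.\<close>
definition observable :: "real^'n^'p \<Rightarrow> real^'n^'n \<Rightarrow> bool" where
  "observable C A \<longleftrightarrow>
     span (\<Union>k<CARD('n). rows (C ** mpow A k)) = (UNIV :: (real^'n) set)"

end

theory Submission
  imports Defs
begin


lemma dot_mv: "inner (x::real^'m) ((A::real^'n^'m) *v y) = inner (transpose A *v x) y"
  by (metis dot_lmul_matrix transpose_matrix_vector)

lemma inv_ex: assumes "invertible (M::real^'n^'n)"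
  shows "M ** matrix_inv M = mat 1" "matrix_inv M ** M = mat 1"
proof -
  have "\<exists>N. M ** N = mat 1 \<and> N ** M = mat 1" using assms invertible_def by blast
  from someI_ex[OF this] show "M ** matrix_inv M = mat 1" "matrix_inv M ** M = mat 1"
    unfolding matrix_inv_def by auto
qed

lemma inv_unique: assumes "(M::real^'n^'n) ** N = mat 1" shows "matrix_inv M = N"
proof -
  have inv: "invertible M" using assms invertible_right_inverse by blast
  have "N ** M = mat 1" using assms matrix_left_right_inverse by blast
  have "matrix_inv M = matrix_inv M ** (M ** N)" using assms by simp
  also have "\<dots> = N" by (simp add: matrix_mul_assoc inv_ex[OF inv])
  finally show ?thesis .
qed

lemma sym_transpose: "sym_mat P \<Longrightarrow> transpose P = P" by (simp add: sym_mat_def)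

lemma pos_def_invertible: assumes "pos_def (P::real^'n^'n)" shows "invertible P"
proof -
  have "\<forall>x. P *v x = 0 \<longrightarrow> x = 0"
    using assms unfolding pos_def_def by (metis inner_zero_right less_irrefl)
  then show ?thesis using matrix_left_invertible_ker invertible_left_inverse by blast
qed

lemma sym_inv: assumes "sym_mat (P::real^'n^'n)" "invertible P" shows "sym_mat (matrix_inv P)"
proof -
  have "transpose (P ** matrix_inv P) = mat 1" using inv_ex[OF assms(2)] by simp
  then have "transpose (matrix_inv P) ** P = mat 1" using assms(1)
    by (simp add: matrix_transpose_mul sym_mat_def)
  then have "P ** transpose (matrix_inv P) = mat 1" using matrix_left_right_inverse by blast
  then show ?thesis using inv_unique unfolding sym_mat_def by metis
qed

lemma pos_def_inv: assumes "pos_def (P::real^'n^'n)" shows "pos_def (matrix_inv P)"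
proof -
  have inv: "invertible P" using pos_def_invertible assms by blast
  have sy: "sym_mat P" using assms pos_def_def by blast
  show ?thesis unfolding pos_def_def
  proof (intro conjI allI impI)
    show "sym_mat (matrix_inv P)" using sym_inv sy inv by blast
    fix x :: "real^'n" assume x: "x \<noteq> 0"
    define y where "y = matrix_inv P *v x"
    have Py: "P *v y = x" unfolding y_def by (simp add: matrix_vector_mul_assoc inv_ex[OF inv])
    have "y \<noteq> 0" using Py x by auto
    then have "0 < inner y (P *v y)" using assms pos_def_def by blast
    also have "inner y (P *v y) = inner (P *v y) y"
      using dot_mv[of y P y] sy by (simp add: sym_mat_def inner_commute)
    finally show "0 < inner x (matrix_inv P *v x)" using Py y_def by simp
  qed
qed

lemma sym_add: "sym_mat X \<Longrightarrow> sym_mat Y \<Longrightarrow> sym_mat (X + Y)"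
  by (simp add: sym_mat_def transpose_def vec_eq_iff)
lemma sym_diff: "sym_mat X \<Longrightarrow> sym_mat Y \<Longrightarrow> sym_mat (X - Y)"
  by (simp add: sym_mat_def transpose_def vec_eq_iff)
lemma sym_congr: "sym_mat X \<Longrightarrow> sym_mat (A ** X ** transpose A)"
  by (simp add: sym_mat_def matrix_transpose_mul matrix_mul_assoc)
lemma sym_scaleR: "sym_mat X \<Longrightarrow> sym_mat (a *\<^sub>R X)"
  by (simp add: sym_mat_def transpose_def vec_eq_iff)
lemma sym_mat1: "sym_mat (mat 1)" by (simp add: sym_mat_def)
lemma sym_BBt: "sym_mat (B ** transpose B)"
  by (simp add: sym_mat_def matrix_transpose_mul)

lemma qf_congr: "inner (x::real^'m) (((A::real^'n^'m) ** (X::real^'n^'n) ** transpose A) *v x) = inner (transpose A *v x) (X *v (transpose A *v x))"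
proof -
  have e: "(A ** X ** transpose A) *v x = A *v (X *v (transpose A *v x))"
    by (simp only: matrix_vector_mul_assoc matrix_mul_assoc)
  show ?thesis by (subst e) (rule dot_mv)
qed

lemma psd_add: "pos_semidef X \<Longrightarrow> pos_semidef Y \<Longrightarrow> pos_semidef (X + Y)"
  unfolding pos_semidef_def by (simp add: sym_add matrix_vector_mult_add_rdistrib inner_add_right)
lemma pd_add_psd: "pos_def X \<Longrightarrow> pos_semidef Y \<Longrightarrow> pos_def (X + Y)"
  unfolding pos_semidef_def pos_def_def
  by (simp add: sym_add matrix_vector_mult_add_rdistrib inner_add_right add_pos_nonneg)
lemma pd_psd: "pos_def X \<Longrightarrow> pos_semidef X"
  unfolding pos_semidef_def pos_def_def
proof (intro conjI allI; (elim conjE)?)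
  fix x :: "real^'a" assume "\<forall>x. x \<noteq> 0 \<longrightarrow> 0 < inner x (X *v x)"
  then show "0 \<le> inner x (X *v x)" by (cases "x = 0") (auto intro: less_imp_le)
qed simp
lemma psd_congr: "pos_semidef X \<Longrightarrow> pos_semidef (A ** X ** transpose A)"
  unfolding pos_semidef_def by (simp add: sym_congr qf_congr)
lemma loewner_trans: "loewner_ge P Q \<Longrightarrow> loewner_ge Q R \<Longrightarrow> loewner_ge P R"
  unfolding loewner_ge_def using psd_add[of "P - Q" "Q - R"] by simp
lemma loewner_pd: "pos_def Y \<Longrightarrow> loewner_ge X Y \<Longrightarrow> pos_def X"
  unfolding loewner_ge_def using pd_add_psd[of Y "X - Y"] by simp

lemma inv_antimono:
  fixes X Y :: "real^'n^'n"
  assumes Y: "pos_def Y" and XY: "loewner_ge X Y"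
  shows "loewner_ge (matrix_inv Y) (matrix_inv X)"
proof -
  have X: "pos_def X" using loewner_pd Y XY by blast
  have iX: "invertible X" and iY: "invertible Y" using X Y pos_def_invertible by blast+
  have sX: "sym_mat X" and sY: "sym_mat Y" using X Y pos_def_def by blast+
  have sXY: "sym_mat (X - Y)" and pXY: "\<And>z. inner z ((X - Y) *v z) \<ge> 0"
    using XY unfolding loewner_ge_def pos_semidef_def by blast+
  have symY: "\<And>a b. inner a (Y *v b) = inner (Y *v a) b"
    using sY dot_mv by (metis sym_mat_def)
  show ?thesis unfolding loewner_ge_def pos_semidef_def
  proof (intro conjI allI)
    show "sym_mat (matrix_inv Y - matrix_inv X)"
      using sym_diff sym_inv sX sY iX iY by blast
    fix x :: "real^'n"
    define z where "z = matrix_inv X *v x"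
    define w where "w = matrix_inv Y *v x"
    have Xz: "X *v z = x" unfolding z_def by (simp add: matrix_vector_mul_assoc inv_ex[OF iX])
    have Yw: "Y *v w = x" unfolding w_def by (simp add: matrix_vector_mul_assoc inv_ex[OF iY])
    have h1: "inner z ((X - Y) *v z) \<ge> 0" by (rule pXY)
    have h1': "inner z (X *v z) - inner z (Y *v z) \<ge> 0"
      using h1 by (simp add: matrix_vector_mult_diff_rdistrib inner_diff_right)
    have h2: "inner (z - w) (Y *v (z - w)) \<ge> 0" using Y pos_def_def
      by (metis inner_zero_left order.refl order_less_le)
    have e2: "inner (z - w) (Y *v (z - w)) = inner z (Y *v z) - 2 * inner x z + inner w x"
      using symY[of w z] Yw
      by (simp add: matrix_vector_mult_diff_distrib inner_diff_left inner_diff_right inner_commute)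
    have "inner x (matrix_inv X *v x) = inner z (X *v z)" using Xz z_def by (simp add: inner_commute)
    moreover have "inner x (matrix_inv Y *v x) = inner w x" using w_def by (simp add: inner_commute)
    moreover have "inner x z = inner z (X *v z)" using Xz by (simp add: inner_commute)
    ultimately show "0 \<le> inner x ((matrix_inv Y - matrix_inv X) *v x)"
      using h1' h2 e2 by (simp add: matrix_vector_mult_diff_rdistrib inner_diff_right)
  qed
qed



lemma eig_in_subspace:
  fixes P :: "real^'n^'n"
  assumes sym: "transpose P = P" and V: "subspace V" and ne: "\<exists>x\<in>V. x \<noteq> 0"
    and inv: "\<forall>x\<in>V. P *v x \<in> V"
  shows "\<exists>u\<in>V. norm u = 1 \<and> (\<exists>l. P *v u = l *\<^sub>R u)"
proof -
  define K where "K = V \<inter> sphere 0 1"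
  define f where "f x = inner x (P *v x)" for x :: "real^'n"
  have symP: "\<And>a b. inner a (P *v b) = inner (P *v a) b" using dot_mv sym by metis
  have cK: "compact K" unfolding K_def using closed_subspace[OF V] compact_sphere
    by (simp add: closed_Int_compact)
  obtain x0 where x0: "x0 \<in> V" "x0 \<noteq> 0" using ne by blast
  have "x0 /\<^sub>R norm x0 \<in> K" unfolding K_def using x0 V by (simp add: subspace_scale)
  then have neK: "K \<noteq> {}" by blast
  have bl: "bounded_linear (\<lambda>x. P *v x)" by (simp add: linear_linear)
  have "continuous_on K (\<lambda>x. P *v x)" using linear_continuous_on[OF bl] by blast
  then have "continuous_on K f" unfolding f_def
    by (intro continuous_on_inner continuous_on_id)
  then obtain u where u: "u \<in> K" and umax: "\<And>y. y \<in> K \<Longrightarrow> f y \<le> f u"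
    using continuous_attains_sup[OF cK neK] by blast
  define \<mu> where "\<mu> = f u"
  have uV: "u \<in> V" and nu: "norm u = 1" using u K_def by auto
  have uu: "inner u u = 1" using nu by (simp add: dot_square_norm)
  have bound: "f x \<le> \<mu> * inner x x" if "x \<in> V" for x
  proof (cases "x = 0")
    case True then show ?thesis by (simp add: f_def)
  next
    case False
    have "x /\<^sub>R norm x \<in> K" unfolding K_def using that False V by (simp add: subspace_scale)
    then have "f (x /\<^sub>R norm x) \<le> \<mu>" using umax \<mu>_def by blast
    moreover have "f (x /\<^sub>R norm x) = f x / (norm x)^2"
      by (simp add: f_def matrix_vector_mult_scaleR power2_eq_square divide_inverse inverse_mult_distrib)
    moreover have "inner x x = (norm x)^2" by (simp add: dot_square_norm)
    moreover have "(norm x)^2 > 0" using False by simp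
    ultimately show ?thesis by (simp add: divide_le_eq mult.commute)
  qed
  define w where "w = \<mu> *\<^sub>R u - P *v u"
  have wV: "w \<in> V" unfolding w_def using uV inv V by (simp add: subspace_diff subspace_scale)
  define a where "a = inner w w"
  define k where "k = \<mu> * inner w w - f w"
  have k0: "k \<ge> 0" using bound[OF wV] k_def by simp
  have a0: "a \<ge> 0" unfolding a_def by simp
  have key: "2 * s * a \<le> s^2 * k" if "s > 0" for s
  proof -
    have "u - s *\<^sub>R w \<in> V" using uV wV V by (simp add: subspace_diff subspace_scale)
    then have b: "f (u - s *\<^sub>R w) \<le> \<mu> * inner (u - s *\<^sub>R w) (u - s *\<^sub>R w)" by (rule bound)
    have e1: "f (u - s *\<^sub>R w) = f u - 2 * s * inner w (P *v u) + s^2 * f w"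
      using symP[of u w] unfolding f_def
      by (simp add: matrix_vector_mult_diff_distrib matrix_vector_mult_scaleR inner_diff_left
          inner_diff_right power2_eq_square inner_commute algebra_simps)
    have e2: "inner (u - s *\<^sub>R w) (u - s *\<^sub>R w) = 1 - 2 * s * inner u w + s^2 * inner w w"
      using uu by (simp add: inner_diff_left inner_diff_right power2_eq_square inner_commute algebra_simps)
    have e3: "inner w (P *v u) = \<mu> * inner u w - a"
      unfolding a_def w_def by (simp add: inner_diff_left inner_diff_right inner_commute algebra_simps)
    have "f (u - s *\<^sub>R w) \<le> \<mu> * (1 - 2 * s * inner u w + s^2 * inner w w)" using b e2 by simp
    then have "f u - 2 * s * (\<mu> * inner u w - a) + s^2 * f w \<le> \<mu> * (1 - 2 * s * inner u w + s^2 * inner w w)"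
      using e1 e3 by simp
    then show ?thesis by (simp add: k_def \<mu>_def algebra_simps)
  qed
  have "a = 0"
  proof (rule ccontr)
    assume "a \<noteq> 0" then have ap: "a > 0" using a0 by simp
    define s where "s = a / (k + 1)"
    have sp: "s > 0" using ap k0 s_def by simp
    have "2 * s * a \<le> s^2 * k" using key sp by blast
    then have "2 * a \<le> s * k" using sp by (simp add: power2_eq_square mult.assoc)
    moreover have "s * k < a" unfolding s_def using ap k0
      by (simp add: field_simps)
    ultimately show False using ap by simp
  qed
  then have "w = 0" unfolding a_def by simp
  then have "P *v u = \<mu> *\<^sub>R u" unfolding w_def by simp
  then show ?thesis using uV nu by blast
qed


lemma eig_basis:
  fixes P :: "real^'n^'n"
  assumes sym: "transpose P = P"
  shows "subspace V \<Longrightarrow> (\<forall>x\<in>V. P *v x \<in> V) \<Longrightarrow>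
    \<exists>S. S \<subseteq> V \<and> finite S \<and> pairwise orthogonal S \<and>
        (\<forall>u\<in>S. norm u = 1 \<and> (\<exists>l. P *v u = l *\<^sub>R u)) \<and> span S = V"
proof (induction "dim V" arbitrary: V rule: less_induct)
  case (less V)
  have symP: "\<And>a b. inner a (P *v b) = inner (P *v a) b" using dot_mv sym by metis
  show ?case
  proof (cases "\<exists>x\<in>V. x \<noteq> 0")
    case False
    then have "V = {0}" using subspace_0[OF less.prems(1)] by auto
    then have "span {} = V" by simp
    then show ?thesis by (intro exI[of _ "{}"]) simp
  next
    case True
    obtain u l where uV: "u \<in> V" and nu: "norm u = 1" and ul: "P *v u = l *\<^sub>R u"
      using eig_in_subspace[OF sym less.prems(1) True less.prems(2)] by blast
    have uu: "inner u u = 1" using nu by (simp add: dot_square_norm)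
    define W where "W = V \<inter> {x. inner u x = 0}"
    have sW: "subspace W" unfolding W_def by (intro subspace_inter less.prems(1) subspace_hyperplane)
    have iW: "\<forall>x\<in>W. P *v x \<in> W"
    proof
      fix x assume x: "x \<in> W"
      have "inner u (P *v x) = inner (P *v u) x" by (rule symP)
      also have "\<dots> = 0" using x ul unfolding W_def by simp
      moreover have "P *v x \<in> V" using x less.prems(2) unfolding W_def by simp
      ultimately show "P *v x \<in> W" unfolding W_def by simp
    qed
    have "span W \<subset> span V"
    proof -
      have "W \<subseteq> V" unfolding W_def by blast
      moreover have "u \<notin> W" unfolding W_def using uu by simp
      ultimately have "W \<subset> V" using uV by blast
      moreover have e: "span W = W" "span V = V" using span_eq_iff[THEN iffD2, OF sW] span_eq_iff[THEN iffD2, OF less.prems(1)] by blast+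
      ultimately show ?thesis by (simp only: e)
    qed
    then have "dim W < dim V" by (rule dim_psubset)
    then obtain S' where S': "S' \<subseteq> W" "finite S'" "pairwise orthogonal S'"
      "\<forall>u\<in>S'. norm u = 1 \<and> (\<exists>l. P *v u = l *\<^sub>R u)" "span S' = W"
      using less.hyps[OF _ sW iW] by blast
    define S where "S = insert u S'"
    have "S \<subseteq> V" using S'(1) uV unfolding S_def W_def by blast
    moreover have "finite S" using S'(2) S_def by simp
    moreover have "pairwise orthogonal S"
    proof -
      have "\<forall>y. y \<in> S' \<and> y \<noteq> u \<longrightarrow> orthogonal u y \<and> orthogonal y u"
        using S'(1) unfolding W_def orthogonal_def by (auto simp: inner_commute)
      then show ?thesis unfolding S_def using S'(3) by (simp add: pairwise_insert)
    qed
    moreover have "\<forall>v\<in>S. norm v = 1 \<and> (\<exists>l. P *v v = l *\<^sub>R v)"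
      using S'(4) nu ul unfolding S_def by blast
    moreover have "span S = V"
    proof
      show "span S \<subseteq> V" using \<open>S \<subseteq> V\<close> less.prems(1) by (simp add: span_minimal)
      show "V \<subseteq> span S"
      proof
        fix x assume x: "x \<in> V"
        have "x - inner u x *\<^sub>R u \<in> W" unfolding W_def
          using x uV less.prems(1) uu by (simp add: subspace_diff subspace_scale inner_diff_right)
        moreover have "span S' \<subseteq> span S" unfolding S_def by (rule span_mono) blast
        ultimately have "x - inner u x *\<^sub>R u \<in> span S" using S'(5) by blast
        moreover have "inner u x *\<^sub>R u \<in> span S" unfolding S_def
          by (simp add: span_base span_scale)
        ultimately have "(x - inner u x *\<^sub>R u) + inner u x *\<^sub>R u \<in> span S" by (rule span_add)
        then show "x \<in> span S" by simp
      qed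
    qed
    ultimately show ?thesis by blast
  qed
qed



definition diag :: "('n::finite \<Rightarrow> real) \<Rightarrow> real^'n^'n" where
  "diag d = (\<chi> i j. if i = j then d i else 0)"

lemma spectral:
  fixes P :: "real^'n^'n"
  assumes sym: "transpose P = P"
  shows "\<exists>(Q::real^'n^'n) d. transpose Q ** Q = mat 1 \<and> Q ** transpose Q = mat 1 \<and> P = Q ** diag d ** transpose Q"
proof -
  obtain S where S: "finite S" "pairwise orthogonal S"
      "\<forall>u\<in>S. norm u = 1 \<and> (\<exists>l. P *v u = l *\<^sub>R u)" "span S = UNIV"
    using eig_basis[OF sym, of UNIV] by auto
  have "0 \<notin> S" using S(3) by force
  then have ind: "independent S" using pairwise_orthogonal_independent S(2) by blast
  have "card S = dim (span S)" using dim_span_eq_card_independent[OF ind] by simp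
  also have "\<dots> = CARD('n)" using S(4) by simp
  finally have cS: "card (UNIV::'n set) = card S" by simp
  obtain f where bij: "bij_betw f (UNIV::'n set) S" using finite_same_card_bij[OF _ S(1) cS] by auto
  have fS: "f j \<in> S" for j using bij bij_betwE by blast
  have finj: "f i = f j \<Longrightarrow> i = j" for i j using bij unfolding bij_betw_def inj_on_def by blast
  have col: "inner (f i) (f j) = (if i = j then 1 else 0)" for i j
  proof (cases "i = j")
    case True
    then show ?thesis using S(3) fS[of j] by (simp add: dot_square_norm)
  next
    case False
    then have "f i \<noteq> f j" using finj by blast
    then have "orthogonal (f i) (f j)" using S(2) fS unfolding pairwise_def by blast
    then show ?thesis using False by (simp add: orthogonal_def)
  qed
  define Q :: "real^'n^'n" where "Q = (\<chi> i j. f j $ i)"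
  have QtQ: "transpose Q ** Q = mat 1"
  proof -
    have "(transpose Q ** Q) $ i $ j = mat 1 $ i $ j" for i j
      using col[of i j] by (simp add: matrix_matrix_mult_def transpose_def Q_def mat_def inner_vec_def)
    then show ?thesis by (simp add: vec_eq_iff)
  qed
  then have QQt: "Q ** transpose Q = mat 1" using matrix_left_right_inverse by blast
  define d where "d j = (SOME l. P *v f j = l *\<^sub>R f j)" for j
  have eig: "P *v f j = d j *\<^sub>R f j" for j
    unfolding d_def using S(3) fS[of j] by (metis (mono_tags, lifting) someI_ex)
  have PQ: "P ** Q = Q ** diag d"
  proof -
    have "(P ** Q) $ i $ j = (Q ** diag d) $ i $ j" for i j
    proof -
      have "(P ** Q) $ i $ j = (P *v f j) $ i"
        by (simp add: matrix_matrix_mult_def matrix_vector_mult_def Q_def)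
      also have "\<dots> = d j * f j $ i" using eig by simp
      also have "\<dots> = (Q ** diag d) $ i $ j"
        by (simp add: matrix_matrix_mult_def diag_def Q_def if_distrib[of "\<lambda>t. _ * t"] cong: if_cong)
      finally show ?thesis .
    qed
    then show ?thesis by (simp add: vec_eq_iff)
  qed
  have "P = P ** (Q ** transpose Q)" using QQt by simp
  also have "\<dots> = Q ** diag d ** transpose Q" using PQ by (simp add: matrix_mul_assoc)
  finally have "P = Q ** diag d ** transpose Q" .
  with QtQ QQt show ?thesis by (intro exI[of _ Q] exI[of _ d] conjI)
qed



lemma diag_mv: "diag e *v w = (\<chi> i. e i * w $ i)"
  by (simp add: vec_eq_iff matrix_vector_mult_def diag_def if_distrib[of "\<lambda>t. t * _"] cong: if_cong)

lemma qf_diag: "inner w (diag e *v w) = (\<Sum>i\<in>UNIV. e i * (w $ i)^2)"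
  by (simp add: diag_mv inner_vec_def power2_eq_square mult.commute mult.left_commute)

lemma transpose_diag: "transpose (diag e) = diag e"
  by (simp add: vec_eq_iff transpose_def diag_def)

lemma qf_QDQ: "inner x ((Q ** diag e ** transpose Q) *v x) = (\<Sum>i\<in>UNIV. e i * ((transpose Q *v x) $ i)^2)"
  using qf_congr[of x Q "diag e"] qf_diag by simp

lemma pd_QDQ:
  fixes Q :: "real^'n^'n"
  assumes QQt: "Q ** transpose Q = mat 1" and e: "\<And>i. e i > 0"
  shows "pos_def (Q ** diag e ** transpose Q)"
  unfolding pos_def_def
proof (intro conjI allI impI)
  show "sym_mat (Q ** diag e ** transpose Q)"
  proof -
    have "sym_mat (diag e)" by (simp add: sym_mat_def transpose_diag)
    then show ?thesis by (rule sym_congr)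
  qed
  fix x :: "real^'n" assume x: "x \<noteq> 0"
  define w where "w = transpose Q *v x"
  have "Q *v w = x" unfolding w_def by (simp only: matrix_vector_mul_assoc QQt matrix_vector_mul_lid)
  then have "w \<noteq> 0" using x by auto
  then obtain i where i: "w $ i \<noteq> 0" by (auto simp: vec_eq_iff)
  have "0 < (\<Sum>i\<in>UNIV. e i * (w $ i)^2)"
  proof (rule sum_pos2[of UNIV i])
    show "0 < e i * (w $ i)^2" using e[of i] i by simp
    show "\<And>j. j \<in> UNIV \<Longrightarrow> 0 \<le> e j * (w $ j)^2" using e by (simp add: less_imp_le)
  qed simp_all
  then show "0 < inner x ((Q ** diag e ** transpose Q) *v x)" using qf_QDQ w_def by metis
qed

lemma diag_mult: "diag a ** diag b = diag (\<lambda>i. a i * b i)"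
  by (simp add: vec_eq_iff matrix_matrix_mult_def diag_def if_distrib[of "\<lambda>t. t * _"] cong: if_cong)

lemma diag_one: "diag (\<lambda>_. 1) = mat 1"
  by (simp add: vec_eq_iff diag_def mat_def)

lemma congr_scale: "(Q::real^'n^'m) ** (k *\<^sub>R (Y::real^'n^'n)) ** transpose Q = k *\<^sub>R (Q ** Y ** transpose Q)"
proof -
  have sc: "((a::real) *\<^sub>R (M :: real^'a^'b)) *v x = a *\<^sub>R (M *v x)" for a M x
    by (simp add: vec_eq_iff matrix_vector_mult_def sum_distrib_left mult.assoc)
  have "\<And>x. (Q ** (k *\<^sub>R Y) ** transpose Q) *v x = (k *\<^sub>R (Q ** Y ** transpose Q)) *v x"
    by (simp only: matrix_vector_mul_assoc[symmetric] sc matrix_vector_mult_scaleR)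
  then show ?thesis using matrix_eq by blast
qed

lemma congr_diff: "(A::real^'n^'m) ** ((X::real^'n^'n) - Y) ** transpose A = A ** X ** transpose A - A ** Y ** transpose A"
proof -
  have "\<And>x. (A ** (X - Y) ** transpose A) *v x = (A ** X ** transpose A - A ** Y ** transpose A) *v x"
    by (simp only: matrix_vector_mul_assoc[symmetric] matrix_vector_mult_diff_rdistrib matrix_vector_mult_diff_distrib)
  then show ?thesis using matrix_eq by blast
qed

lemma QDQ_lin: "(Q::real^'n^'n) ** diag a ** transpose Q - k *\<^sub>R (Q ** diag b ** transpose Q)
    = Q ** diag (\<lambda>i. a i - k * b i) ** transpose Q"
proof -
  have "diag (\<lambda>i. a i - k * b i) = diag a - k *\<^sub>R diag b"
    by (simp add: vec_eq_iff diag_def)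
  then show ?thesis by (simp add: congr_diff congr_scale)
qed

lemma det_QDQ: assumes QQt: "(Q::real^'n^'n) ** transpose Q = mat 1"
  shows "det (Q ** diag e ** transpose Q) = (\<Prod>i\<in>UNIV. e i)"
proof -
  have "det Q * det (transpose Q) = 1" using det_mul[of Q "transpose Q"] QQt by simp
  moreover have "det (diag e) = (\<Prod>i\<in>UNIV. e i)" by (subst det_diagonal) (simp_all add: diag_def)
  ultimately show ?thesis by (simp add: det_mul)
qed

lemma inv_QDQ: assumes QtQ: "transpose (Q::real^'n^'n) ** Q = mat 1" and QQt: "Q ** transpose Q = mat 1"
  and e: "\<And>i. e i \<noteq> 0"
  shows "matrix_inv (Q ** diag e ** transpose Q) = Q ** diag (\<lambda>i. 1 / e i) ** transpose Q"
proof (rule inv_unique)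
  have "(Q ** diag e ** transpose Q) ** (Q ** diag (\<lambda>i. 1 / e i) ** transpose Q)
      = Q ** diag e ** (transpose Q ** Q) ** diag (\<lambda>i. 1 / e i) ** transpose Q"
    by (simp add: matrix_mul_assoc)
  also have "\<dots> = Q ** (diag e ** diag (\<lambda>i. 1 / e i)) ** transpose Q"
    using QtQ by (simp add: matrix_mul_assoc)
  also have "\<dots> = mat 1" using e QQt by (simp add: diag_mult diag_one)
  finally show "(Q ** diag e ** transpose Q) ** (Q ** diag (\<lambda>i. 1 / e i) ** transpose Q) = mat 1" .
qed

lemma trace_QDQ: assumes QtQ: "transpose (Q::real^'n^'n) ** Q = mat 1"
  shows "trace (Q ** diag e ** transpose Q) = (\<Sum>i\<in>UNIV. e i)"
proof -
  have "trace (Q ** diag e ** transpose Q) = trace (transpose Q ** (Q ** diag e))"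
    by (rule trace_mul_sym)
  also have "\<dots> = trace (diag e)" using QtQ by (simp add: matrix_mul_assoc)
  also have "\<dots> = (\<Sum>i\<in>UNIV. e i)" by (simp add: trace_def diag_def)
  finally show ?thesis .
qed


lemma eig_set:
  fixes Q :: "real^'n^'n"
  assumes QtQ: "transpose Q ** Q = mat 1" and QQt: "Q ** transpose Q = mat 1"
    and P: "P = Q ** diag d ** transpose Q"
  shows "{l. \<exists>v. v \<noteq> 0 \<and> P *v v = l *\<^sub>R v} = range d"
proof
  show "{l. \<exists>v. v \<noteq> 0 \<and> P *v v = l *\<^sub>R v} \<subseteq> range d"
  proof
    fix l assume "l \<in> {l. \<exists>v. v \<noteq> 0 \<and> P *v v = l *\<^sub>R v}"
    then obtain v where v: "v \<noteq> 0" "P *v v = l *\<^sub>R v" by blast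
    define w where "w = transpose Q *v v"
    have "Q *v w = v" unfolding w_def by (simp only: matrix_vector_mul_assoc QQt matrix_vector_mul_lid)
    then have "w \<noteq> 0" using v by auto
    then obtain i where i: "w $ i \<noteq> 0" by (auto simp: vec_eq_iff)
    have "transpose Q *v (P *v v) = diag d *v w"
      unfolding P w_def by (simp only: matrix_vector_mul_assoc matrix_mul_assoc QtQ matrix_mul_lid)
    moreover have "transpose Q *v (P *v v) = l *\<^sub>R w"
      unfolding w_def v(2) by (simp add: matrix_vector_mult_scaleR)
    ultimately have "diag d *v w = l *\<^sub>R w" by simp
    then have "d i * w $ i = l * w $ i" by (simp add: vec_eq_iff diag_mv)
    then have "l = d i" using i by simp
    then show "l \<in> range d" by simp
  qed
  show "range d \<subseteq> {l. \<exists>v. v \<noteq> 0 \<and> P *v v = l *\<^sub>R v}"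
  proof
    fix l assume "l \<in> range d"
    then obtain i where l: "l = d i" by blast
    define v where "v = Q *v axis i 1"
    have tv: "transpose Q *v v = axis i 1" unfolding v_def
      by (simp only: matrix_vector_mul_assoc QtQ matrix_vector_mul_lid)
    have "v \<noteq> 0"
    proof
      assume "v = 0"
      then have "(axis i 1 :: real^'n) = 0" using tv by simp
      then have "(axis i 1 :: real^'n) $ i = (0::real^'n) $ i" by simp
      then show False by simp
    qed
    moreover have "P *v v = l *\<^sub>R v"
    proof -
      have "P *v v = Q *v (diag d *v (transpose Q *v v))" unfolding P
        by (simp only: matrix_vector_mul_assoc matrix_mul_assoc)
      also have "diag d *v (transpose Q *v v) = d i *\<^sub>R axis i 1"
        unfolding tv by (simp add: diag_mv vec_eq_iff axis_def)
      finally show ?thesis unfolding l v_def by (simp add: matrix_vector_mult_scaleR)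
    qed
    ultimately show "l \<in> {l. \<exists>v. v \<noteq> 0 \<and> P *v v = l *\<^sub>R v}" by blast
  qed
qed

lemma d_pos:
  fixes Q :: "real^'n^'n"
  assumes QtQ: "transpose Q ** Q = mat 1" and P: "P = Q ** diag d ** transpose Q"
    and pd: "pos_def P"
  shows "d i > 0"
proof -
  define v where "v = Q *v axis i 1"
  have tv: "transpose Q *v v = axis i 1" unfolding v_def
    by (simp only: matrix_vector_mul_assoc QtQ matrix_vector_mul_lid)
  have "v \<noteq> 0"
  proof
    assume "v = 0"
    then have "(axis i 1 :: real^'n) = 0" using tv by simp
    then have "(axis i 1 :: real^'n) $ i = (0::real^'n) $ i" by simp
    then show False by simp
  qed
  then have "0 < inner v (P *v v)" using pd pos_def_def by blast
  also have "inner v (P *v v) = (\<Sum>k\<in>UNIV. d k * ((axis i 1 :: real^'n) $ k)^2)"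
    unfolding P qf_QDQ tv ..
  also have "\<dots> = (\<Sum>k\<in>UNIV. if k = i then d i else 0)" by (rule sum.cong) (auto simp: axis_def)
  also have "\<dots> = d i" by simp
  finally show ?thesis .
qed


definition gf :: "real \<Rightarrow> real" where "gf x = ln (1 - x) + 1 / (1 - x) - 1"

lemma gf0: "gf 0 = 0" by (simp add: gf_def)

lemma gf_mono: assumes "0 \<le> x" "x < y" "y < 1" shows "gf x < gf y"
proof -
  define a where "a = 1 / (1 - x)"
  define b where "b = 1 / (1 - y)"
  have a1: "a \<ge> 1" using assms unfolding a_def by simp
  have ab: "a < b" using assms unfolding a_def b_def by (simp add: frac_less2)
  have a0: "a > 0" "b > 0" using a1 ab by auto
  have la: "ln (1 - x) = - ln a" unfolding a_def using assms by (simp add: ln_div)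
  have lb: "ln (1 - y) = - ln b" unfolding b_def using assms by (simp add: ln_div)
  have ia: "1 / (1 - x) = a" "1 / (1 - y) = b" unfolding a_def b_def by auto
  have q: "b / a > 0" using a0 by simp
  have "ln (b / a) \<le> b / a - 1" using ln_le_minus_one[OF q] .
  moreover have "ln (b / a) \<noteq> b / a - 1" using ln_eq_minus_one[OF q] ab a0 by auto
  ultimately have "ln (b / a) < b / a - 1" by simp
  also have "b / a - 1 = (b - a) / a" using a0 by (simp add: field_simps)
  also have "\<dots> \<le> b - a" using a1 ab by (simp add: divide_le_eq)
  finally have "ln b - ln a < b - a" using a0 by (simp add: ln_div)
  then show ?thesis unfolding gf_def la lb ia by simp
qed

lemma gf_nonneg: "0 \<le> x \<Longrightarrow> x < 1 \<Longrightarrow> 0 \<le> gf x"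
  using gf_mono[of 0 x] gf0 by (cases "x = 0") auto

lemma gf_big: assumes "Y \<ge> 1" shows "gf (1 - 1 / Y) \<ge> Y / 2 - 1"
proof -
  have Y0: "Y > 0" using assms by simp
  have "gf (1 - 1 / Y) = Y - 1 - ln Y" unfolding gf_def using Y0 by (simp add: ln_div)
  moreover have "ln Y \<le> Y / 2"
  proof -
    have "ln Y = ln 2 + ln (Y / 2)" using Y0 by (simp add: ln_div)
    also have "\<dots> \<le> ln 2 + (Y / 2 - 1)" using ln_le_minus_one[of "Y/2"] Y0 by simp
    finally show ?thesis using ln_2_less_1 by simp
  qed
  ultimately show ?thesis by simp
qed

lemma gamma_eq:
  fixes Q :: "real^'n^'n"
  assumes QtQ: "transpose Q ** Q = mat 1" and QQt: "Q ** transpose Q = mat 1"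
    and P: "P = Q ** diag d ** transpose Q" and lt: "\<And>i. \<theta> * d i < 1"
  shows "gamma \<theta> P = 1/2 * (\<Sum>i\<in>UNIV. gf (\<theta> * d i))"
proof -
  have I: "mat 1 = Q ** diag (\<lambda>_. 1) ** transpose Q" using QQt by (simp add: diag_one)
  have M: "mat 1 - \<theta> *\<^sub>R P = Q ** diag (\<lambda>i. 1 - \<theta> * d i) ** transpose Q"
    unfolding P by (subst I) (simp add: QDQ_lin)
  have nz: "\<And>i. 1 - \<theta> * d i \<noteq> 0" using lt by (simp add: less_le)
  have "det (mat 1 - \<theta> *\<^sub>R P) = (\<Prod>i\<in>UNIV. 1 - \<theta> * d i)" unfolding M using det_QDQ[OF QQt] .
  then have ld: "ln (det (mat 1 - \<theta> *\<^sub>R P)) = (\<Sum>i\<in>UNIV. ln (1 - \<theta> * d i))"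
    using ln_prod[of UNIV "\<lambda>i. 1 - \<theta> * d i"] nz by simp
  have tr: "trace (matrix_inv (mat 1 - \<theta> *\<^sub>R P)) = (\<Sum>i\<in>UNIV. 1 / (1 - \<theta> * d i))"
    unfolding M inv_QDQ[OF QtQ QQt nz] trace_QDQ[OF QtQ] ..
  have cd: "real CARD('n) = (\<Sum>i\<in>(UNIV::'n set). 1)" by simp
  show ?thesis unfolding gamma_def ld tr cd gf_def
    by (simp add: sum.distrib sum_subtractf)
qed

lemma theta_pd: fixes P :: "real^'n^'n" assumes pd: "pos_def P" and c: "c > 0"
  shows "theta_c c P > 0 \<and> pos_def (matrix_inv P - theta_c c P *\<^sub>R mat 1)"
proof -
  have "transpose P = P" using pd unfolding pos_def_def sym_mat_def by blast
  then obtain Q :: "real^'n^'n" and d where QtQ: "transpose Q ** Q = mat 1"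
    and QQt: "Q ** transpose Q = mat 1" and P: "P = Q ** diag d ** transpose Q"
    using spectral by blast
  have dpos: "\<And>i. d i > 0" using d_pos[OF QtQ P pd] .
  define L where "L = Max (range d)"
  have lam: "lambda_max P = L" unfolding lambda_max_def L_def eig_set[OF QtQ QQt P] ..
  have dL: "\<And>i. d i \<le> L" unfolding L_def by simp
  have "Max (range d) \<in> range d" by (rule Max_in) simp_all
  then obtain i0 where "Max (range d) = d i0" by blast
  then have i0: "d i0 = L" unfolding L_def by simp
  have L0: "L > 0" using dpos[of i0] i0 by simp
  define G where "G \<theta> = 1/2 * (\<Sum>i\<in>UNIV. gf (\<theta> * d i))" for \<theta>
  have lt1: "\<theta> * d i < 1" if "0 \<le> \<theta>" "\<theta> < 1 / L" for \<theta> i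
  proof -
    have "\<theta> * d i \<le> \<theta> * L" using that dL by (simp add: mult_left_mono)
    also have "\<theta> * L < 1" using that L0 by (simp add: less_divide_eq)
    finally show ?thesis .
  qed
  have gam: "gamma \<theta> P = G \<theta>" if "0 \<le> \<theta>" "\<theta> < 1 / L" for \<theta>
    unfolding G_def using gamma_eq[OF QtQ QQt P] lt1[OF that] by blast
  have Gmono: "G a < G b" if "0 \<le> a" "a < b" "b < 1 / L" for a b
  proof -
    have "(\<Sum>i\<in>UNIV. gf (a * d i)) < (\<Sum>i\<in>UNIV. gf (b * d i))"
    proof (rule sum_strict_mono)
      fix i :: 'n
      show "gf (a * d i) < gf (b * d i)"
        using gf_mono[of "a * d i" "b * d i"] that dpos[of i] lt1[of b i]
        by (simp add: mult_nonneg_nonneg mult_strict_right_mono)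
    qed simp_all
    then show ?thesis unfolding G_def by simp
  qed
  define Y where "Y = 4 * c + 4"
  define \<theta>2 where "\<theta>2 = (1 - 1 / Y) / L"
  have Y1: "Y > 1" unfolding Y_def using c by simp
  have t2: "0 < \<theta>2" "\<theta>2 < 1 / L" unfolding \<theta>2_def using Y1 L0 by (simp_all add: divide_strict_right_mono)
  have s1: "gf (\<theta>2 * d i0) \<le> (\<Sum>i\<in>UNIV. gf (\<theta>2 * d i))"
  proof (rule member_le_sum)
    fix x :: 'n
    have "0 \<le> \<theta>2 * d x" using t2 dpos[of x] by simp
    moreover have "\<theta>2 * d x < 1" using lt1[of \<theta>2 x] t2 by simp
    ultimately show "0 \<le> gf (\<theta>2 * d x)" by (rule gf_nonneg)
  qed simp_all
  have s2: "\<theta>2 * d i0 = 1 - 1 / Y" unfolding \<theta>2_def i0 using L0 by simp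
  have s3: "gf (1 - 1 / Y) \<ge> Y / 2 - 1" using gf_big Y1 by simp
  from s1 s2 have "gf (1 - 1 / Y) \<le> (\<Sum>i\<in>UNIV. gf (\<theta>2 * d i))" by simp
  with s3 have "(\<Sum>i\<in>UNIV. gf (\<theta>2 * d i)) \<ge> Y / 2 - 1" by linarith
  have "(\<Sum>i\<in>UNIV. gf (\<theta>2 * d i)) \<ge> 2 * c + 1"
  proof -
    have "Y / 2 - 1 = 2 * c + 1" unfolding Y_def by (simp add: field_simps)
    then show ?thesis using \<open>(\<Sum>i\<in>UNIV. gf (\<theta>2 * d i)) \<ge> Y / 2 - 1\<close> by linarith
  qed
  then have G2: "G \<theta>2 \<ge> c" unfolding G_def by simp
  have G0: "G 0 = 0" unfolding G_def by (simp add: gf0)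
  have cont: "continuous_on {0..\<theta>2} G"
  proof -
    have nz: "\<And>\<theta> i. \<theta> \<in> {0..\<theta>2} \<Longrightarrow> 1 - \<theta> * d i \<noteq> 0" using lt1 t2 by (fastforce simp: less_le)
    show ?thesis unfolding G_def gf_def
      by (intro continuous_intros) (use nz in \<open>auto\<close>)
  qed
  obtain \<theta>1 where th1: "0 \<le> \<theta>1" "\<theta>1 \<le> \<theta>2" "G \<theta>1 = c"
    using IVT'[of G 0 c \<theta>2] G0 G2 cont c t2 by auto
  have th1': "0 < \<theta>1" "\<theta>1 < 1 / L" using th1 G0 c t2 by (auto simp: less_le)
  have ex1: "\<exists>!\<theta>. 0 < \<theta> \<and> \<theta> < inverse (lambda_max P) \<and> gamma \<theta> P = c"
  proof (rule ex1I[of _ \<theta>1])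
    show "0 < \<theta>1 \<and> \<theta>1 < inverse (lambda_max P) \<and> gamma \<theta>1 P = c"
      using th1' th1 gam lam by (simp add: inverse_eq_divide)
    fix \<theta> assume h: "0 < \<theta> \<and> \<theta> < inverse (lambda_max P) \<and> gamma \<theta> P = c"
    then have h': "0 < \<theta>" "\<theta> < 1 / L" "G \<theta> = c" using gam lam by (auto simp: inverse_eq_divide)
    show "\<theta> = \<theta>1"
    proof (rule ccontr)
      assume "\<theta> \<noteq> \<theta>1"
      then have "\<theta> < \<theta>1 \<or> \<theta>1 < \<theta>" by auto
      then show False using Gmono h' th1' th1 by (metis less_irrefl less_imp_le)
    qed
  qed
  define \<theta> where "\<theta> = theta_c c P"
  have tp: "0 < \<theta> \<and> \<theta> < inverse (lambda_max P) \<and> gamma \<theta> P = c"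
    unfolding \<theta>_def theta_c_def by (rule theI'[OF ex1])
  then have tp': "0 < \<theta>" "\<theta> < 1 / L" using lam by (auto simp: inverse_eq_divide)
  have dnz: "\<And>i. d i \<noteq> 0" using dpos by (simp add: less_le)
  have I: "mat 1 = Q ** diag (\<lambda>_. 1) ** transpose Q" using QQt by (simp add: diag_one)
  have "matrix_inv P - \<theta> *\<^sub>R mat 1 = Q ** diag (\<lambda>i. 1 / d i - \<theta> * 1) ** transpose Q"
    unfolding P inv_QDQ[OF QtQ QQt dnz] by (subst I) (rule QDQ_lin)
  moreover have "\<And>i. 1 / d i - \<theta> * 1 > 0"
  proof -
    fix i
    have "1 / L \<le> 1 / d i" using dL[of i] dpos[of i] by (simp add: frac_le)
    then show "1 / d i - \<theta> * 1 > 0" using tp' by simp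
  qed
  ultimately have "pos_def (matrix_inv P - \<theta> *\<^sub>R mat 1)" using pd_QDQ[OF QQt] by simp
  then show ?thesis using tp' \<theta>_def by blast
qed



lemma scaled_id_mv: "((a::real) *\<^sub>R (mat 1 :: real^'n^'n)) *v x = a *\<^sub>R x"
proof -
  have "((a::real) *\<^sub>R (M :: real^'n^'n)) *v x = a *\<^sub>R (M *v x)" for M
    by (simp add: vec_eq_iff matrix_vector_mult_def sum_distrib_left mult.assoc)
  then show ?thesis by simp
qed

lemma psd_scaled_id: "a \<ge> 0 \<Longrightarrow> pos_semidef (a *\<^sub>R (mat 1 :: real^'n^'n))"
  unfolding pos_semidef_def by (simp add: sym_scaleR sym_mat1 scaled_id_mv)

lemma S_psd: "pos_def ((D::real^'p^'p) ** transpose D) \<Longrightarrow>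
   pos_semidef (transpose (C::real^'n^'p) ** matrix_inv (D ** transpose D) ** C)"
  using psd_congr[of "matrix_inv (D ** transpose D)" "transpose C"] pd_psd pos_def_inv by auto

lemma riccati_R_ge:
  fixes A :: "real^'n^'n" and B :: "real^'m^'n" and C :: "real^'n^'p" and D :: "real^'p^'p"
  assumes P: "pos_def P" and c: "c > 0" and R: "pos_def (D ** transpose D)"
  shows "loewner_ge (riccati_R c A B C D P) (riccati A B C D P)"
proof -
  define S where "S = transpose C ** matrix_inv (D ** transpose D) ** C"
  define \<theta> where "\<theta> = theta_c c P"
  have S: "pos_semidef S" using S_psd R S_def by blast
  have th: "\<theta> > 0" "pos_def (matrix_inv P - \<theta> *\<^sub>R mat 1)" using theta_pd[OF P c] \<theta>_def by auto
  define M where "M = matrix_inv P + S"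
  have eq: "matrix_inv P + S - \<theta> *\<^sub>R mat 1 = (matrix_inv P - \<theta> *\<^sub>R mat 1) + S" by simp
  have Y: "pos_def (M - \<theta> *\<^sub>R mat 1)" unfolding M_def eq using pd_add_psd th(2) S by blast
  have "loewner_ge M (M - \<theta> *\<^sub>R mat 1)" unfolding loewner_ge_def
    using psd_scaled_id[of \<theta>] th(1) by simp
  then have le: "loewner_ge (matrix_inv (M - \<theta> *\<^sub>R mat 1)) (matrix_inv M)"
    using inv_antimono Y by blast
  have "riccati_R c A B C D P - riccati A B C D P
     = A ** (matrix_inv (M - \<theta> *\<^sub>R mat 1) - matrix_inv M) ** transpose A"
    unfolding riccati_R_def riccati_def congr_diff M_def S_def \<theta>_def by simp
  then show ?thesis using le psd_congr unfolding loewner_ge_def by metis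
qed

lemma riccati_mono:
  fixes A :: "real^'n^'n" and B :: "real^'m^'n" and C :: "real^'n^'p" and D :: "real^'p^'p"
  assumes Q: "pos_def Q" and PQ: "loewner_ge P Q" and R: "pos_def (D ** transpose D)"
  shows "loewner_ge (riccati A B C D P) (riccati A B C D Q)"
proof -
  define S where "S = transpose C ** matrix_inv (D ** transpose D) ** C"
  have S: "pos_semidef S" using S_psd R S_def by blast
  have P: "pos_def P" using loewner_pd Q PQ by blast
  have "loewner_ge (matrix_inv Q) (matrix_inv P)" using inv_antimono Q PQ by blast
  then have l1: "loewner_ge (matrix_inv Q + S) (matrix_inv P + S)" unfolding loewner_ge_def by simp
  have pd: "pos_def (matrix_inv P + S)" using pd_add_psd pos_def_inv P S by blast
  have le: "loewner_ge (matrix_inv (matrix_inv P + S)) (matrix_inv (matrix_inv Q + S))"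
    using inv_antimono pd l1 by blast
  have "riccati A B C D P - riccati A B C D Q
     = A ** (matrix_inv (matrix_inv P + S) - matrix_inv (matrix_inv Q + S)) ** transpose A"
    unfolding riccati_def congr_diff S_def by simp
  then show ?thesis using le psd_congr unfolding loewner_ge_def by metis
qed

lemma step_pd:
  fixes A :: "real^'n^'n" and B :: "real^'m^'n"
  assumes X: "pos_def X" and BB: "pos_def (B ** transpose B)"
  shows "pos_def (A ** X ** transpose A + B ** transpose B)"
    "loewner_ge (A ** X ** transpose A + B ** transpose B) (B ** transpose B)"
proof -
  have ps: "pos_semidef (A ** X ** transpose A)" using psd_congr pd_psd X by blast
  show "pos_def (A ** X ** transpose A + B ** transpose B)"
    using pd_add_psd[OF BB ps] by (simp add: add.commute)
  show "loewner_ge (A ** X ** transpose A + B ** transpose B) (B ** transpose B)"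
    unfolding loewner_ge_def using ps by simp
qed

theorem lemma4:
  fixes A :: "real^'n^'n" and B :: "real^'m^'n" and C :: "real^'n^'p" and D :: "real^'p^'p"
    and c :: real and P0 :: "real^'n^'n" and Pt :: "nat \<Rightarrow> real^'n^'n"
    and Pbar :: "nat \<Rightarrow> real^'n^'n"
  assumes "reachable A B" and "observable C A"
    and "pos_def (B ** transpose B)" and "pos_def (D ** transpose D)"
    and "c > 0"
    and "Pbar 0 = B ** transpose B"
    and "\<And>t. Pbar (Suc t) = riccati A B C D (Pbar t)"
    and "pos_def (Pt 0)" and "loewner_ge (Pt 0) (B ** transpose B)"
    and "\<And>t. Pt (Suc t) = riccati_R c A B C D (Pt t)"
  shows "\<forall>q t. q \<le> t \<longrightarrow> loewner_ge (Pt t) (Pbar q)"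
proof -
  note BB = assms(3) and R = assms(4) and c = assms(5)
  define S where "S = transpose C ** matrix_inv (D ** transpose D) ** C"
  have S: "pos_semidef S" using S_psd R S_def by blast
  have Pt: "pos_def (Pt t) \<and> loewner_ge (Pt t) (B ** transpose B)" for t
  proof (induction t)
    case 0 then show ?case using assms(8,9) by blast
  next
    case (Suc t)
    define \<theta> where "\<theta> = theta_c c (Pt t)"
    have th: "pos_def (matrix_inv (Pt t) - \<theta> *\<^sub>R mat 1)" using theta_pd Suc c \<theta>_def by blast
    have eq: "matrix_inv (Pt t) + S - \<theta> *\<^sub>R mat 1 = (matrix_inv (Pt t) - \<theta> *\<^sub>R mat 1) + S" by simp
    have "pos_def (matrix_inv (Pt t) + S - \<theta> *\<^sub>R mat 1)" unfolding eq using pd_add_psd th S by blast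
    then have X: "pos_def (matrix_inv (matrix_inv (Pt t) + S - \<theta> *\<^sub>R mat 1))" using pos_def_inv by blast
    have "Pt (Suc t) = A ** matrix_inv (matrix_inv (Pt t) + S - \<theta> *\<^sub>R mat 1) ** transpose A + B ** transpose B"
      using assms(10) unfolding riccati_R_def S_def \<theta>_def by simp
    then show ?case using step_pd[OF X BB] by simp
  qed
  have Pb: "pos_def (Pbar q)" for q
  proof (induction q)
    case 0 then show ?case using assms(6) BB by simp
  next
    case (Suc q)
    have "pos_def (matrix_inv (Pbar q) + S)" using pd_add_psd pos_def_inv Suc S by blast
    then have X: "pos_def (matrix_inv (matrix_inv (Pbar q) + S))" using pos_def_inv by blast
    have "Pbar (Suc q) = A ** matrix_inv (matrix_inv (Pbar q) + S) ** transpose A + B ** transpose B"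
      using assms(7) unfolding riccati_def S_def by simp
    then show ?case using step_pd[OF X BB] by simp
  qed
  have main: "\<forall>t. q \<le> t \<longrightarrow> loewner_ge (Pt t) (Pbar q)" for q
  proof (induction q)
    case 0 then show ?case using Pt assms(6) by simp
  next
    case (Suc q)
    show ?case
    proof (intro allI impI)
      fix t assume "Suc q \<le> t"
      then obtain t' where t: "t = Suc t'" "q \<le> t'" by (cases t) auto
      have "loewner_ge (Pt t) (riccati A B C D (Pt t'))"
        using riccati_R_ge[of "Pt t'" c D A B C] Pt c R t(1) assms(10) by simp
      moreover have "loewner_ge (riccati A B C D (Pt t')) (riccati A B C D (Pbar q))"
        using riccati_mono[OF Pb] Suc.IH t(2) R by blast
      ultimately show "loewner_ge (Pt t) (Pbar (Suc q))"
        using loewner_trans assms(7) by metis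
    qed
  qed
  show ?thesis using main by blast
qed


end
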